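(* Let $(\mathcal X,\mathcal A,\mu)$ be a measurable space with a $\sigma$-finite measure $\mu$, and let $p_1,p_2$ be probability densities with respect to $\mu$ that are mutually absolutely continuous, i.e. $p_1(x)=0\iff p_2(x)=0$ for $\mu$-a.e. $x$. Let $B=p_1/p_2$ (defined arbitrarily, e.g. as $1$, on $\{p_2=0\}$). For $t\in\mathbb R$ put $I(t)=\int p_1^{t}p_2^{1-t}\,d\mu\in[0,\infty]$, $D=\{t: I(t)<\infty\}$, and $\rho=I(1/2)=\int\sqrt{p_1p_2}\,d\mu$. For $t\in D$ define $R_1(t)=\mathrm{Var}_{\mathcal H_1}(B^{t-1})$, $R_2(t)=\mathrm{Var}_{\mathcal H_2}(B^{t})$ and $R(t)=\max\{R_1(t),R_2(t)\}\in[0,\infty]$. (i) If $p_1$ and $p_2$ are not equal $\mu$-a.e., then for every $t\in D$, $R(t)\ge 1-\rho^2$, with equality if and only if $t=1/2$; in particular $t=1/2$ is the unique minimizer of $R$ over $D$ and $R(1/2)=1-\rho^2$. (ii) For every $t\neq 1/2$ there exists a mutually absolutely continuous pair of densities $(p_1,p_2)$ (on some $\sigma$-finite measure space) for which $I(t)<\infty$ but $R(t)=+\infty$. In particular, for every fixed $t\ne 1/2$, $\sup\{R_{p_1,p_2}(t): (p_1,p_2)\in\mathcal P_{\mathrm{ac}},\ I(t)<\infty\}=+\infty$, whereas for every $(p_1,p_2)\in\mathcal P_{\mathrm{ac}}$, $R_{p_1,p_2}(1/2)=1-\rho(p_1,p_2)^2<\infty$.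
   Context: $\mathbb E_{\mathcal H_j}$, $\mathrm{Var}_{\mathcal H_j}$ denote expectation/variance when $X$ has density $p_j$. Variances take values in $[0,\infty]$, with $\mathrm{Var}(Z)=+\infty$ when $\mathbb E[Z^2]=+\infty$. $\mathcal P_{\mathrm{ac}}$ denotes the class of all pairs of mutually absolutely continuous $\mu$-densities $(p_1,p_2)$; subscripts $R_{p_1,p_2}$, $\rho(p_1,p_2)$ indicate dependence on the pair. *)

theory Defs
  imports "HOL-Analysis.Analysis"
begin

definition ac_dens_pair :: "'a measure \<Rightarrow> ('a \<Rightarrow> real) \<Rightarrow> ('a \<Rightarrow> real) \<Rightarrow> bool" where
  "ac_dens_pair M p1 p2 \<longleftrightarrow>
     sigma_finite_measure M \<and>
     p1 \<in> borel_measurable M \<and> p2 \<in> borel_measurable M \<and>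
     (\<forall>x\<in>space M. 0 \<le> p1 x \<and> 0 \<le> p2 x) \<and>
     (\<integral>\<^sup>+ x. ennreal (p1 x) \<partial>M) = 1 \<and>
     (\<integral>\<^sup>+ x. ennreal (p2 x) \<partial>M) = 1 \<and>
     (AE x in M. (p1 x = 0 \<longleftrightarrow> p2 x = 0))"

definition lr :: "('a \<Rightarrow> real) \<Rightarrow> ('a \<Rightarrow> real) \<Rightarrow> 'a \<Rightarrow> real" where
  "lr p1 p2 x = (if p2 x = 0 then 1 else p1 x / p2 x)"

text \<open>I(t) = integral of p1^t p2^(1-t), in [0,\<infinity>] (with 0 powr a = 0).\<close>
definition I_fun :: "'a measure \<Rightarrow> ('a \<Rightarrow> real) \<Rightarrow> ('a \<Rightarrow> real) \<Rightarrow> real \<Rightarrow> ennreal" where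
  "I_fun M p1 p2 t = (\<integral>\<^sup>+ x. ennreal (p1 x powr t * p2 x powr (1 - t)) \<partial>M)"

definition D_set :: "'a measure \<Rightarrow> ('a \<Rightarrow> real) \<Rightarrow> ('a \<Rightarrow> real) \<Rightarrow> real set" where
  "D_set M p1 p2 = {t. I_fun M p1 p2 t < \<infinity>}"

definition rho :: "'a measure \<Rightarrow> ('a \<Rightarrow> real) \<Rightarrow> ('a \<Rightarrow> real) \<Rightarrow> real" where
  "rho M p1 p2 = (LINT x|M. sqrt (p1 x * p2 x))"

definition var_H :: "'a measure \<Rightarrow> ('a \<Rightarrow> real) \<Rightarrow> ('a \<Rightarrow> real) \<Rightarrow> ennreal" where
  "var_H M p Z =
     (if (\<integral>\<^sup>+ x. ennreal (p x * (Z x)\<^sup>2) \<partial>M) = \<infinity> then \<infinity>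
      else (\<integral>\<^sup>+ x. ennreal (p x * (Z x - (LINT y|M. p y * Z y))\<^sup>2) \<partial>M))"

definition R1 :: "'a measure \<Rightarrow> ('a \<Rightarrow> real) \<Rightarrow> ('a \<Rightarrow> real) \<Rightarrow> real \<Rightarrow> ennreal" where
  "R1 M p1 p2 t = var_H M p1 (\<lambda>x. lr p1 p2 x powr (t - 1))"

definition R2 :: "'a measure \<Rightarrow> ('a \<Rightarrow> real) \<Rightarrow> ('a \<Rightarrow> real) \<Rightarrow> real \<Rightarrow> ennreal" where
  "R2 M p1 p2 t = var_H M p2 (\<lambda>x. lr p1 p2 x powr t)"

definition R_fun :: "'a measure \<Rightarrow> ('a \<Rightarrow> real) \<Rightarrow> ('a \<Rightarrow> real) \<Rightarrow> real \<Rightarrow> ennreal" where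
  "R_fun M p1 p2 t = max (R1 M p1 p2 t) (R2 M p1 p2 t)"

end

theory Submission
  imports Defs
begin


lemma ac_sym: "ac_dens_pair M p1 p2 \<Longrightarrow> ac_dens_pair M p2 p1"
  unfolding ac_dens_pair_def by (auto elim: AE_mp)

lemma I_sym: "I_fun M p2 p1 s = I_fun M p1 p2 (1 - s)"
  unfolding I_fun_def by (simp add: mult.commute)

lemma rho_sym: "rho M p2 p1 = rho M p1 p2"
  unfolding rho_def by (simp add: mult.commute)

lemma acD:
  assumes "ac_dens_pair M p1 p2"
  shows "sigma_finite_measure M" "p1 \<in> borel_measurable M" "p2 \<in> borel_measurable M"
    "\<And>x. x \<in> space M \<Longrightarrow> 0 \<le> p1 x" "\<And>x. x \<in> space M \<Longrightarrow> 0 \<le> p2 x"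
    "(\<integral>\<^sup>+ x. ennreal (p1 x) \<partial>M) = 1" "(\<integral>\<^sup>+ x. ennreal (p2 x) \<partial>M) = 1"
    "AE x in M. 0 \<le> p1 x \<and> 0 \<le> p2 x \<and> (p1 x = 0 \<longleftrightarrow> p2 x = 0)"
proof -
  show "sigma_finite_measure M" "p1 \<in> borel_measurable M" "p2 \<in> borel_measurable M"
    "\<And>x. x \<in> space M \<Longrightarrow> 0 \<le> p1 x" "\<And>x. x \<in> space M \<Longrightarrow> 0 \<le> p2 x"
    "(\<integral>\<^sup>+ x. ennreal (p1 x) \<partial>M) = 1" "(\<integral>\<^sup>+ x. ennreal (p2 x) \<partial>M) = 1"
    using assms unfolding ac_dens_pair_def by auto
  have a: "AE x in M. (p1 x = 0 \<longleftrightarrow> p2 x = 0)" using assms unfolding ac_dens_pair_def by auto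
  have b: "AE x in M. 0 \<le> p1 x \<and> 0 \<le> p2 x" using assms unfolding ac_dens_pair_def
    by (intro AE_I2) auto
  show "AE x in M. 0 \<le> p1 x \<and> 0 \<le> p2 x \<and> (p1 x = 0 \<longleftrightarrow> p2 x = 0)"
    using a b by eventually_elim auto
qed

lemma I_meas:
  fixes p1 p2 :: "'a \<Rightarrow> real"
  assumes "p1 \<in> borel_measurable M" "p2 \<in> borel_measurable M"
  shows "(\<lambda>x. p1 x powr a * p2 x powr b) \<in> borel_measurable M"
  using assms by measurable

lemma I_one:
  assumes ac: "ac_dens_pair M p1 p2"
  shows "I_fun M p1 p2 1 = 1"
proof -
  have "AE x in M. ennreal (p1 x powr 1 * p2 x powr (1 - 1)) = ennreal (p1 x)"
    using acD(8)[OF ac] by eventually_elim auto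
  hence "I_fun M p1 p2 1 = (\<integral>\<^sup>+ x. ennreal (p1 x) \<partial>M)"
    unfolding I_fun_def by (rule nn_integral_cong_AE)
  thus ?thesis using acD(6)[OF ac] by simp
qed

lemma I_zero:
  assumes ac: "ac_dens_pair M p1 p2"
  shows "I_fun M p1 p2 0 = 1"
  using I_one[OF ac_sym[OF ac]] I_sym[of M p2 p1 1] by simp

lemma pw_R2a:
  assumes "0 \<le> a" "0 \<le> b" "a = 0 \<longleftrightarrow> b = 0"
  shows "b * (lr (\<lambda>_. a) (\<lambda>_. b) x powr t)\<^sup>2 = a powr (2*t) * b powr (1 - 2*t)"
proof (cases "a = 0")
  case True thus ?thesis using assms by (simp add: lr_def)
next
  case False
  hence pos: "a > 0" "b > 0" using assms by auto
  have "b * (lr (\<lambda>_. a) (\<lambda>_. b) x powr t)\<^sup>2 = exp (ln b) * (exp (t * (ln a - ln b)))\<^sup>2"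
    using pos by (simp add: lr_def powr_def ln_div)
  also have "\<dots> = exp (2*t * ln a + (1 - 2*t) * ln b)"
    by (simp add: power2_eq_square exp_add[symmetric] algebra_simps)
  also have "\<dots> = a powr (2*t) * b powr (1 - 2*t)"
    using pos by (simp add: powr_def exp_add)
  finally show ?thesis .
qed

lemma pw_R2b:
  assumes "0 \<le> a" "0 \<le> b" "a = 0 \<longleftrightarrow> b = 0"
  shows "b * lr (\<lambda>_. a) (\<lambda>_. b) x powr t = a powr t * b powr (1 - t)"
proof (cases "a = 0")
  case True thus ?thesis using assms by (simp add: lr_def)
next
  case False
  hence pos: "a > 0" "b > 0" using assms by auto
  have "b * lr (\<lambda>_. a) (\<lambda>_. b) x powr t = exp (ln b) * exp (t * (ln a - ln b))"
    using pos by (simp add: lr_def powr_def ln_div)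
  also have "\<dots> = exp (t * ln a + (1 - t) * ln b)"
    by (simp add: exp_add[symmetric] algebra_simps)
  also have "\<dots> = a powr t * b powr (1 - t)"
    using pos by (simp add: powr_def exp_add)
  finally show ?thesis .
qed

lemma pw_R1a:
  assumes "0 \<le> a" "0 \<le> b" "a = 0 \<longleftrightarrow> b = 0"
  shows "a * (lr (\<lambda>_. a) (\<lambda>_. b) x powr (t - 1))\<^sup>2 = a powr (2*t - 1) * b powr (1 - (2*t - 1))"
proof (cases "a = 0")
  case True thus ?thesis using assms by (simp add: lr_def)
next
  case False
  hence pos: "a > 0" "b > 0" using assms by auto
  have "a * (lr (\<lambda>_. a) (\<lambda>_. b) x powr (t - 1))\<^sup>2 = exp (ln a) * (exp ((t - 1) * (ln a - ln b)))\<^sup>2"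
    using pos by (simp add: lr_def powr_def ln_div)
  also have "\<dots> = exp ((2*t - 1) * ln a + (1 - (2*t - 1)) * ln b)"
    by (simp add: power2_eq_square exp_add[symmetric] algebra_simps)
  also have "\<dots> = a powr (2*t - 1) * b powr (1 - (2*t - 1))"
    using pos by (simp add: powr_def exp_add)
  finally show ?thesis .
qed

lemma pw_R1b:
  assumes "0 \<le> a" "0 \<le> b" "a = 0 \<longleftrightarrow> b = 0"
  shows "a * lr (\<lambda>_. a) (\<lambda>_. b) x powr (t - 1) = a powr t * b powr (1 - t)"
proof (cases "a = 0")
  case True thus ?thesis using assms by (simp add: lr_def)
next
  case False
  hence pos: "a > 0" "b > 0" using assms by auto
  have "a * lr (\<lambda>_. a) (\<lambda>_. b) x powr (t - 1) = exp (ln a) * exp ((t - 1) * (ln a - ln b))"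
    using pos by (simp add: lr_def powr_def ln_div)
  also have "\<dots> = exp (t * ln a + (1 - t) * ln b)"
    by (simp add: exp_add[symmetric] algebra_simps)
  also have "\<dots> = a powr t * b powr (1 - t)"
    using pos by (simp add: powr_def exp_add)
  finally show ?thesis .
qed

lemma lr_at: "lr p1 p2 x = lr (\<lambda>_. p1 x) (\<lambda>_. p2 x) y"
  by (simp add: lr_def)

lemma var_H_formula:
  assumes pm: "p \<in> borel_measurable M" and pn: "\<And>x. x \<in> space M \<Longrightarrow> 0 \<le> p x"
    and p1: "(\<integral>\<^sup>+x. ennreal (p x) \<partial>M) = 1"
    and Zm: "Z \<in> borel_measurable M"
    and fin: "(\<integral>\<^sup>+x. ennreal (p x * (Z x)\<^sup>2) \<partial>M) \<noteq> \<infinity>"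
  shows "var_H M p Z = ennreal ((LINT x|M. p x * (Z x)\<^sup>2) - (LINT x|M. p x * Z x)\<^sup>2)"
proof -
  have ip: "integrable M p"
    by (rule integrableI_nn_integral_finite[where x=1]) (auto simp: p1 pm pn intro: AE_I2)
  have intp: "integral\<^sup>L M p = 1"
    using integral_eq_nn_integral[OF pm] pn p1 by (auto intro: AE_I2)
  have m2: "(\<lambda>x. p x * (Z x)\<^sup>2) \<in> borel_measurable M" using pm Zm by measurable
  obtain c where c: "(\<integral>\<^sup>+x. ennreal (p x * (Z x)\<^sup>2) \<partial>M) = ennreal c"
    using fin by (cases "(\<integral>\<^sup>+x. ennreal (p x * (Z x)\<^sup>2) \<partial>M)") auto
  have i2: "integrable M (\<lambda>x. p x * (Z x)\<^sup>2)"
    by (rule integrableI_nn_integral_finite[OF m2 _ c]) (auto intro!: AE_I2 simp: pn)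
  have i1: "integrable M (\<lambda>x. p x * Z x)"
  proof (rule Bochner_Integration.integrable_bound[where f = "\<lambda>x. p x + p x * (Z x)\<^sup>2"])
    show "integrable M (\<lambda>x. p x + p x * (Z x)\<^sup>2)" using ip i2 by simp
    show "(\<lambda>x. p x * Z x) \<in> borel_measurable M" using pm Zm by measurable
    show "AE x in M. norm (p x * Z x) \<le> norm (p x + p x * (Z x)\<^sup>2)"
    proof (intro AE_I2)
      fix x assume x: "x \<in> space M"
      have "0 \<le> (\<bar>Z x\<bar> - 1)\<^sup>2" by simp
      also have "(\<bar>Z x\<bar> - 1)\<^sup>2 = (Z x)\<^sup>2 - 2 * \<bar>Z x\<bar> + 1"
        by (simp add: power2_diff power2_abs)
      finally have z: "\<bar>Z x\<bar> \<le> 1 + (Z x)\<^sup>2" by simp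
      have "\<bar>p x * Z x\<bar> = p x * \<bar>Z x\<bar>" using pn[OF x] by (simp add: abs_mult)
      also have "\<dots> \<le> p x * (1 + (Z x)\<^sup>2)" by (rule mult_left_mono[OF z pn[OF x]])
      finally show "norm (p x * Z x) \<le> norm (p x + p x * (Z x)\<^sup>2)"
        using pn[OF x] by (simp add: algebra_simps)
    qed
  qed
  define E where "E = (LINT x|M. p x * Z x)"
  have eq: "\<And>x. p x * (Z x - E)\<^sup>2 = p x * (Z x)\<^sup>2 - (2*E) * (p x * Z x) + E\<^sup>2 * p x"
    by (simp add: power2_eq_square algebra_simps)
  have iv: "integrable M (\<lambda>x. p x * (Z x - E)\<^sup>2)"
    unfolding eq using i1 i2 ip by simp
  have "(\<integral>\<^sup>+x. ennreal (p x * (Z x - E)\<^sup>2) \<partial>M) = ennreal (LINT x|M. p x * (Z x - E)\<^sup>2)"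
    by (rule nn_integral_eq_integral[OF iv]) (auto intro!: AE_I2 simp: pn)
  also have "(LINT x|M. p x * (Z x - E)\<^sup>2) = (LINT x|M. p x * (Z x)\<^sup>2) - E\<^sup>2"
    unfolding eq using i1 i2 ip intp by (simp add: E_def power2_eq_square)
  finally show ?thesis unfolding var_H_def E_def using fin by simp
qed



lemma I_pos:
  assumes ac: "ac_dens_pair M p1 p2"
  shows "0 < I_fun M p1 p2 s"
proof (rule ccontr)
  assume "\<not> 0 < I_fun M p1 p2 s"
  hence z: "I_fun M p1 p2 s = 0" by (simp add: not_less)
  have m: "(\<lambda>x. ennreal (p1 x powr s * p2 x powr (1 - s))) \<in> borel_measurable M"
    using I_meas[OF acD(2,3)[OF ac]] by measurable
  have ae1: "AE x in M. ennreal (p1 x powr s * p2 x powr (1 - s)) = 0"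
    using z unfolding I_fun_def using nn_integral_0_iff_AE[OF m] by simp
  have ae0: "AE x in M. ennreal (p1 x) = 0"
    using ae1 acD(8)[OF ac]
  proof eventually_elim
    case (elim x)
    show ?case
    proof (rule ccontr)
      assume "ennreal (p1 x) \<noteq> 0"
      hence "p1 x \<noteq> 0" by auto
      hence "p1 x powr s * p2 x powr (1 - s) > 0" using elim(2) by simp
      thus False using elim(1) by (simp add: ennreal_eq_0_iff)
    qed
  qed
  have "(\<integral>\<^sup>+ x. ennreal (p1 x) \<partial>M) = 0"
    using nn_integral_cong_AE[OF ae0] by simp
  thus False using acD(6)[OF ac] by simp
qed

lemma R2_eq:
  assumes ac: "ac_dens_pair M p1 p2"
  shows "R2 M p1 p2 t = (if I_fun M p1 p2 (2*t) = \<infinity> then \<infinity>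
     else ennreal (enn2real (I_fun M p1 p2 (2*t)) - (enn2real (I_fun M p1 p2 t))\<^sup>2))"
proof -
  note m = acD(2,3)[OF ac]
  have e2: "AE x in M. p2 x * (lr p1 p2 x powr t)\<^sup>2 = p1 x powr (2*t) * p2 x powr (1 - 2*t)"
    using acD(8)[OF ac] by eventually_elim (subst lr_at, rule pw_R2a, auto)
  have e1: "AE x in M. p2 x * lr p1 p2 x powr t = p1 x powr t * p2 x powr (1 - t)"
    using acD(8)[OF ac] by eventually_elim (subst lr_at, rule pw_R2b, auto)
  have n2: "(\<integral>\<^sup>+x. ennreal (p2 x * (lr p1 p2 x powr t)\<^sup>2) \<partial>M) = I_fun M p1 p2 (2*t)"
    unfolding I_fun_def by (rule nn_integral_cong_AE) (use e2 in eventually_elim, simp)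
  have lrm: "(\<lambda>x. lr p1 p2 x) \<in> borel_measurable M"
    unfolding lr_def using m by measurable
  have l2: "(LINT x|M. p2 x * (lr p1 p2 x powr t)\<^sup>2) = enn2real (I_fun M p1 p2 (2*t))"
  proof -
    have "(LINT x|M. p2 x * (lr p1 p2 x powr t)\<^sup>2) = (LINT x|M. p1 x powr (2*t) * p2 x powr (1 - 2*t))"
      by (rule integral_cong_AE) (use m lrm e2 in auto)
    also have "\<dots> = enn2real (I_fun M p1 p2 (2*t))"
      unfolding I_fun_def
      by (rule integral_eq_nn_integral[OF I_meas[OF m]]) (use acD(8)[OF ac] in eventually_elim, auto)
    finally show ?thesis .
  qed
  have l1: "(LINT x|M. p2 x * lr p1 p2 x powr t) = enn2real (I_fun M p1 p2 t)"
  proof -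
    have "(LINT x|M. p2 x * lr p1 p2 x powr t) = (LINT x|M. p1 x powr t * p2 x powr (1 - t))"
      by (rule integral_cong_AE) (use m lrm e1 in auto)
    also have "\<dots> = enn2real (I_fun M p1 p2 t)"
      unfolding I_fun_def
      by (rule integral_eq_nn_integral[OF I_meas[OF m]]) (use acD(8)[OF ac] in eventually_elim, auto)
    finally show ?thesis .
  qed
  show ?thesis
  proof (cases "I_fun M p1 p2 (2*t) = \<infinity>")
    case True thus ?thesis unfolding R2_def var_H_def using n2 by simp
  next
    case False
    have "R2 M p1 p2 t = ennreal ((LINT x|M. p2 x * (lr p1 p2 x powr t)\<^sup>2) - (LINT x|M. p2 x * lr p1 p2 x powr t)\<^sup>2)"
      unfolding R2_def
      by (rule var_H_formula) (use m lrm acD(5,7)[OF ac] n2 False in auto)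
    thus ?thesis using False l1 l2 by simp
  qed
qed

lemma R1_eq:
  assumes ac: "ac_dens_pair M p1 p2"
  shows "R1 M p1 p2 t = (if I_fun M p1 p2 (2*t - 1) = \<infinity> then \<infinity>
     else ennreal (enn2real (I_fun M p1 p2 (2*t - 1)) - (enn2real (I_fun M p1 p2 t))\<^sup>2))"
proof -
  note m = acD(2,3)[OF ac]
  have e2: "AE x in M. p1 x * (lr p1 p2 x powr (t - 1))\<^sup>2 = p1 x powr (2*t - 1) * p2 x powr (1 - (2*t - 1))"
    using acD(8)[OF ac] by eventually_elim (subst lr_at, rule pw_R1a, auto)
  have e1: "AE x in M. p1 x * lr p1 p2 x powr (t - 1) = p1 x powr t * p2 x powr (1 - t)"
    using acD(8)[OF ac] by eventually_elim (subst lr_at, rule pw_R1b, auto)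
  have n2: "(\<integral>\<^sup>+x. ennreal (p1 x * (lr p1 p2 x powr (t - 1))\<^sup>2) \<partial>M) = I_fun M p1 p2 (2*t - 1)"
    unfolding I_fun_def by (rule nn_integral_cong_AE) (use e2 in eventually_elim, simp)
  have lrm: "(\<lambda>x. lr p1 p2 x) \<in> borel_measurable M"
    unfolding lr_def using m by measurable
  have l2: "(LINT x|M. p1 x * (lr p1 p2 x powr (t - 1))\<^sup>2) = enn2real (I_fun M p1 p2 (2*t - 1))"
  proof -
    have "(LINT x|M. p1 x * (lr p1 p2 x powr (t - 1))\<^sup>2) = (LINT x|M. p1 x powr (2*t - 1) * p2 x powr (1 - (2*t - 1)))"
      by (rule integral_cong_AE) (use m lrm e2 in auto)
    also have "\<dots> = enn2real (I_fun M p1 p2 (2*t - 1))"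
      unfolding I_fun_def
      by (rule integral_eq_nn_integral[OF I_meas[OF m]]) (use acD(8)[OF ac] in eventually_elim, auto)
    finally show ?thesis .
  qed
  have l1: "(LINT x|M. p1 x * lr p1 p2 x powr (t - 1)) = enn2real (I_fun M p1 p2 t)"
  proof -
    have "(LINT x|M. p1 x * lr p1 p2 x powr (t - 1)) = (LINT x|M. p1 x powr t * p2 x powr (1 - t))"
      by (rule integral_cong_AE) (use m lrm e1 in auto)
    also have "\<dots> = enn2real (I_fun M p1 p2 t)"
      unfolding I_fun_def
      by (rule integral_eq_nn_integral[OF I_meas[OF m]]) (use acD(8)[OF ac] in eventually_elim, auto)
    finally show ?thesis .
  qed
  show ?thesis
  proof (cases "I_fun M p1 p2 (2*t - 1) = \<infinity>")
    case True thus ?thesis unfolding R1_def var_H_def using n2 by simp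
  next
    case False
    have "R1 M p1 p2 t = ennreal ((LINT x|M. p1 x * (lr p1 p2 x powr (t - 1))\<^sup>2) - (LINT x|M. p1 x * lr p1 p2 x powr (t - 1))\<^sup>2)"
      unfolding R1_def
      by (rule var_H_formula) (use m lrm acD(4,6)[OF ac] n2 False in auto)
    thus ?thesis using False l1 l2 by simp
  qed
qed



lemma half_pw: "0 \<le> a \<Longrightarrow> 0 \<le> b \<Longrightarrow> a powr (1/2) * b powr (1 - 1/2) = sqrt (a*b)"
  by (simp add: powr_half_sqrt real_sqrt_mult)

lemma half_pw': "0 \<le> a \<Longrightarrow> 0 \<le> b \<Longrightarrow> a powr (1/2) * b powr (1/2) = sqrt (a*b)"
  by (simp add: powr_half_sqrt real_sqrt_mult)

lemma avg_pw:
  fixes a b :: real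
  assumes "0 \<le> a" "0 \<le> b"
  shows "ennreal ((a+b)/2) = ennreal (1/2) * (ennreal a + ennreal b)"
proof -
  have "ennreal a + ennreal b = ennreal (a+b)" using assms by (rule ennreal_plus[symmetric])
  moreover have "ennreal (1/2) * ennreal (a+b) = ennreal (1/2 * (a+b))"
    using assms by (intro ennreal_mult[symmetric]) auto
  ultimately show ?thesis by simp
qed

lemma amgm_enn_le:
  fixes a b :: real
  assumes "0 \<le> a" "0 \<le> b"
  shows "ennreal (sqrt (a*b)) \<le> ennreal ((a+b)/2)"
  by (rule ennreal_leI, rule arith_geo_mean_sqrt[OF assms])

lemma avg_int:
  assumes ac: "ac_dens_pair M p1 p2"
  shows "(\<integral>\<^sup>+x. ennreal ((p1 x + p2 x)/2) \<partial>M) = 1"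
proof -
  note m = acD(2,3)[OF ac]
  have "(\<integral>\<^sup>+x. ennreal ((p1 x + p2 x)/2) \<partial>M) = (\<integral>\<^sup>+x. ennreal (1/2) * (ennreal (p1 x) + ennreal (p2 x)) \<partial>M)"
    by (rule nn_integral_cong) (use acD(4,5)[OF ac] in \<open>simp only: avg_pw\<close>)
  also have "\<dots> = ennreal (1/2) * ((\<integral>\<^sup>+x. ennreal (p1 x) \<partial>M) + (\<integral>\<^sup>+x. ennreal (p2 x) \<partial>M))"
    using m by (simp add: nn_integral_cmult nn_integral_add)
  also have "\<dots> = ennreal (1/2) * ennreal 2" using acD(6,7)[OF ac] by simp
  also have "\<dots> = ennreal (1/2 * 2)" by (rule ennreal_mult[symmetric]) auto
  also have "\<dots> = 1" by simp
  finally show ?thesis .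
qed

lemma rho_props:
  assumes ac: "ac_dens_pair M p1 p2"
  shows "I_fun M p1 p2 (1/2) = ennreal (rho M p1 p2)" "0 < rho M p1 p2" "rho M p1 p2 \<le> 1"
proof -
  note m = acD(2,3)[OF ac]
  have S: "I_fun M p1 p2 (1/2) = (\<integral>\<^sup>+x. ennreal (sqrt (p1 x * p2 x)) \<partial>M)"
    unfolding I_fun_def by (rule nn_integral_cong) (use acD(4,5)[OF ac] in \<open>simp add: half_pw'\<close>)
  have "(\<integral>\<^sup>+x. ennreal (sqrt (p1 x * p2 x)) \<partial>M) \<le> (\<integral>\<^sup>+x. ennreal ((p1 x + p2 x)/2) \<partial>M)"
    by (rule nn_integral_mono) (use acD(4,5)[OF ac] in \<open>rule amgm_enn_le; auto\<close>)
  hence le1: "I_fun M p1 p2 (1/2) \<le> 1" using S avg_int[OF ac] by simp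
  have r: "rho M p1 p2 = enn2real (I_fun M p1 p2 (1/2))"
    unfolding rho_def S
    apply (rule integral_eq_nn_integral)
    using m apply measurable
    using acD(8)[OF ac] by eventually_elim auto
  have fin: "I_fun M p1 p2 (1/2) \<noteq> \<infinity>" using le1 by (auto simp: top_unique)
  show e: "I_fun M p1 p2 (1/2) = ennreal (rho M p1 p2)" unfolding r using fin
    by (simp add: ennreal_enn2real_if)
  show "0 < rho M p1 p2" using I_pos[OF ac, of "1/2"] e by simp
  show "rho M p1 p2 \<le> 1" using le1 e by simp
qed

lemma amgm_eq:
  fixes a b :: real
  assumes "0 \<le> a" "0 \<le> b" "(a + b)/2 \<le> sqrt (a*b)"
  shows "a = b"
proof -
  have "(sqrt a - sqrt b)\<^sup>2 = a + b - 2 * sqrt (a*b)"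
    using assms by (simp add: power2_diff real_sqrt_mult)
  also have "\<dots> \<le> 0" using assms by simp
  finally have "sqrt a = sqrt b" by simp
  thus ?thesis using assms by simp
qed

lemma amgm_enn:
  fixes a b :: real
  assumes "0 \<le> a" "0 \<le> b" "ennreal ((a + b)/2) \<le> ennreal (sqrt (a*b))"
  shows "a = b"
proof -
  have "(a + b)/2 \<le> sqrt (a*b)"
    using assms ennreal_le_iff[of "sqrt (a*b)" "(a+b)/2"] by (metis mult_nonneg_nonneg real_sqrt_ge_zero)
  thus ?thesis using amgm_eq assms(1,2) by blast
qed

lemma rho_lt1:
  assumes ac: "ac_dens_pair M p1 p2" and ne: "\<not> (AE x in M. p1 x = p2 x)"
  shows "rho M p1 p2 < 1"
proof -
  note m = acD(2,3)[OF ac]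
  have S: "I_fun M p1 p2 (1/2) = (\<integral>\<^sup>+x. ennreal (sqrt (p1 x * p2 x)) \<partial>M)"
    unfolding I_fun_def by (rule nn_integral_cong) (use acD(4,5)[OF ac] in \<open>simp add: half_pw'\<close>)
  have nAE: "\<not> (AE x in M. ennreal ((p1 x + p2 x)/2) \<le> ennreal (sqrt (p1 x * p2 x)))"
  proof
    assume a: "AE x in M. ennreal ((p1 x + p2 x)/2) \<le> ennreal (sqrt (p1 x * p2 x))"
    have "AE x in M. p1 x = p2 x" using a acD(8)[OF ac]
      by eventually_elim (rule amgm_enn, auto)
    with ne show False by blast
  qed
  have lt: "(\<integral>\<^sup>+x. ennreal (sqrt (p1 x * p2 x)) \<partial>M) < (\<integral>\<^sup>+x. ennreal ((p1 x + p2 x)/2) \<partial>M)"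
  proof (rule nn_integral_less)
    show "(\<lambda>x. ennreal (sqrt (p1 x * p2 x))) \<in> borel_measurable M" using m by measurable
    show "(\<lambda>x. ennreal ((p1 x + p2 x)/2)) \<in> borel_measurable M" using m by measurable
    show "(\<integral>\<^sup>+x. ennreal (sqrt (p1 x * p2 x)) \<partial>M) \<noteq> \<infinity>"
      using rho_props(1)[OF ac] S by simp
    show "AE x in M. ennreal (sqrt (p1 x * p2 x)) \<le> ennreal ((p1 x + p2 x)/2)"
      using acD(8)[OF ac] by eventually_elim (rule amgm_enn_le, auto)
    show "\<not> (AE x in M. ennreal ((p1 x + p2 x)/2) \<le> ennreal (sqrt (p1 x * p2 x)))"
      by (rule nAE)
  qed
  have "ennreal (rho M p1 p2) = (\<integral>\<^sup>+x. ennreal (sqrt (p1 x * p2 x)) \<partial>M)"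
    using S rho_props(1)[OF ac] by simp
  also note lt
  also have "(\<integral>\<^sup>+x. ennreal ((p1 x + p2 x)/2) \<partial>M) = ennreal 1" using avg_int[OF ac] by simp
  finally show ?thesis by (simp add: ennreal_less_iff)
qed



lemma holder_pw:
  fixes x y th a b A C :: real
  assumes x: "0 < x" and y: "0 < y" and th: "0 < th" "th < 1" and A: "0 < A" and C: "0 < C"
  shows "x powr (th*a + (1-th)*b) * y powr (1 - (th*a + (1-th)*b))
    \<le> A powr th * C powr (1-th) * (th/A * (x powr a * y powr (1-a)) + (1-th)/C * (x powr b * y powr (1-b)))"
proof -
  define u where "u = x powr a * y powr (1-a) / A"
  define v where "v = x powr b * y powr (1-b) / C"
  have u: "u > 0" "v > 0" using x y A C by (simp_all add: u_def v_def)
  have Y: "u powr th * v powr (1-th) \<le> th*u + (1-th) * v"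
    by (rule Youngs_inequality_0) (use th u in auto)
  have K: "A powr th * C powr (1-th) > 0" using A C by simp
  have lnu: "ln u = a * ln x + (1-a) * ln y - ln A"
    using x y A by (simp add: u_def ln_div ln_mult ln_powr)
  have lnv: "ln v = b * ln x + (1-b) * ln y - ln C"
    using x y C by (simp add: v_def ln_div ln_mult ln_powr)
  have nz: "x \<noteq> 0" "y \<noteq> 0" "A \<noteq> 0" "C \<noteq> 0" "u \<noteq> 0" "v \<noteq> 0" using x y A C u by auto
  have "A powr th * C powr (1-th) * (u powr th * v powr (1-th))
      = exp (th * ln A + (1-th) * ln C + th * ln u + (1-th) * ln v)"
    using nz by (simp add: powr_def exp_add)
  also have "th * ln A + (1-th) * ln C + th * ln u + (1-th) * ln v
      = (th*a + (1-th)*b) * ln x + (1 - (th*a + (1-th)*b)) * ln y"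
    unfolding lnu lnv by (simp add: algebra_simps)
  also have "exp \<dots> = x powr (th*a + (1-th)*b) * y powr (1 - (th*a + (1-th)*b))"
    using nz by (simp add: powr_def exp_add)
  finally have eq: "A powr th * C powr (1-th) * (u powr th * v powr (1-th))
      = x powr (th*a + (1-th)*b) * y powr (1 - (th*a + (1-th)*b))" .
  have r: "th/A * (x powr a * y powr (1-a)) + (1-th)/C * (x powr b * y powr (1-b)) = th*u + (1-th) * v"
    by (simp add: u_def v_def)
  show ?thesis unfolding r eq[symmetric]
    by (rule mult_left_mono[OF Y]) (use K in simp)
qed

lemma lin_pw:
  fixes c1 c2 u v :: real
  assumes "0 \<le> c1" "0 \<le> c2" "0 \<le> u" "0 \<le> v"
  shows "ennreal (c1 * u + c2 * v) = ennreal c1 * ennreal u + ennreal c2 * ennreal v"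
proof -
  have "ennreal (c1 * u + c2 * v) = ennreal (c1*u) + ennreal (c2 * v)"
    using assms by (intro ennreal_plus) auto
  also have "ennreal (c1*u) = ennreal c1 * ennreal u" using assms by (rule_tac ennreal_mult) auto
  also have "ennreal (c2 * v) = ennreal c2 * ennreal v" using assms by (rule_tac ennreal_mult) auto
  finally show ?thesis .
qed

lemma I_fin_eq:
  assumes "I_fun M p1 p2 a \<noteq> \<infinity>"
  shows "I_fun M p1 p2 a = ennreal (enn2real (I_fun M p1 p2 a))"
  using assms by (simp add: ennreal_enn2real_if)

lemma I_holder:
  assumes ac: "ac_dens_pair M p1 p2" and th: "0 < th" "th < 1"
    and fa: "I_fun M p1 p2 a \<noteq> \<infinity>" and fb: "I_fun M p1 p2 b \<noteq> \<infinity>"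
  shows "I_fun M p1 p2 (th*a + (1-th)*b)
     \<le> ennreal (enn2real (I_fun M p1 p2 a) powr th * enn2real (I_fun M p1 p2 b) powr (1-th))"
proof -
  note m = acD(2,3)[OF ac]
  define A where "A = enn2real (I_fun M p1 p2 a)"
  define C where "C = enn2real (I_fun M p1 p2 b)"
  have IA: "I_fun M p1 p2 a = ennreal A" unfolding A_def by (rule I_fin_eq[OF fa])
  have IC: "I_fun M p1 p2 b = ennreal C" unfolding C_def by (rule I_fin_eq[OF fb])
  have A: "0 < A" using I_pos[OF ac, of a] IA by simp
  have C: "0 < C" using I_pos[OF ac, of b] IC by simp
  define K where "K = A powr th * C powr (1-th)"
  have K: "0 < K" using A C by (simp add: K_def)
  define f where "f x = p1 x powr a * p2 x powr (1-a)" for x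
  define g where "g x = p1 x powr b * p2 x powr (1-b)" for x
  have fm: "(\<lambda>x. ennreal (f x)) \<in> borel_measurable M" unfolding f_def using m by measurable
  have gm: "(\<lambda>x. ennreal (g x)) \<in> borel_measurable M" unfolding g_def using m by measurable
  have "I_fun M p1 p2 (th*a + (1-th)*b) \<le> (\<integral>\<^sup>+x. ennreal (K * (th/A * f x + (1-th)/C * g x)) \<partial>M)"
    unfolding I_fun_def
  proof (rule nn_integral_mono_AE)
    show "AE x in M. ennreal (p1 x powr (th*a + (1-th)*b) * p2 x powr (1 - (th*a + (1-th)*b)))
        \<le> ennreal (K * (th/A * f x + (1-th)/C * g x))"
      using acD(8)[OF ac]
    proof eventually_elim
      case (elim x)
      show ?case
      proof (cases "p1 x = 0")
        case True thus ?thesis by simp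
      next
        case False
        hence "0 < p1 x" "0 < p2 x" using elim by auto
        from holder_pw[OF this th A C, of a b]
        show ?thesis unfolding K_def f_def g_def by (rule ennreal_leI)
      qed
    qed
  qed
  also have "(\<integral>\<^sup>+x. ennreal (K * (th/A * f x + (1-th)/C * g x)) \<partial>M)
      = (\<integral>\<^sup>+x. ennreal (K*th/A) * ennreal (f x) + ennreal (K*(1-th)/C) * ennreal (g x) \<partial>M)"
  proof (rule nn_integral_cong)
    fix x assume x: "x \<in> space M"
    have "K * (th/A * f x + (1-th)/C * g x) = (K*th/A) * f x + (K*(1-th)/C) * g x"
      by (simp add: algebra_simps)
    moreover have "0 \<le> f x" "0 \<le> g x" unfolding f_def g_def by simp_all
    ultimately show "ennreal (K * (th/A * f x + (1-th)/C * g x))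
      = ennreal (K*th/A) * ennreal (f x) + ennreal (K*(1-th)/C) * ennreal (g x)"
      using K A C th by (simp only:) (rule lin_pw, auto)
  qed
  also have "\<dots> = ennreal (K*th/A) * I_fun M p1 p2 a + ennreal (K*(1-th)/C) * I_fun M p1 p2 b"
    using fm gm by (simp add: nn_integral_add nn_integral_cmult I_fun_def f_def g_def)
  also have "\<dots> = ennreal (K*th) + ennreal (K*(1-th))"
  proof -
    have "ennreal (K*th/A) * ennreal A = ennreal (K*th/A * A)"
      using K A th by (intro ennreal_mult[symmetric]) auto
    also have "\<dots> = ennreal (K*th)" using A by simp
    finally have e1: "ennreal (K*th/A) * ennreal A = ennreal (K*th)" .
    have "ennreal (K*(1-th)/C) * ennreal C = ennreal (K*(1-th)/C * C)"
      using K C th by (intro ennreal_mult[symmetric]) auto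
    also have "\<dots> = ennreal (K*(1-th))" using C by simp
    finally have e2: "ennreal (K*(1-th)/C) * ennreal C = ennreal (K*(1-th))" .
    show ?thesis unfolding IA IC e1 e2 ..
  qed
  also have "\<dots> = ennreal (K*th + K*(1-th))" using K th by (intro ennreal_plus[symmetric]) auto
  also have "\<dots> = ennreal K" by (simp add: algebra_simps)
  finally show ?thesis unfolding K_def A_def C_def .
qed



lemma coefs:
  fixes t :: real
  assumes "t > 1/2"
  shows "(4*t-2)/(4*t-1) * (4*t-1) = 4*t-2" "(1 - (4*t-2)/(4*t-1)) * (4*t-1) = 1"
    "2*t/(4*t-1) * (4*t-1) = 2*t" "(1 - 2*t/(4*t-1)) * (4*t-1) = 2*t-1"
proof -
  have nz: "4*t-1 \<noteq> 0" using assms by simp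
  show a: "(4*t-2)/(4*t-1) * (4*t-1) = 4*t-2" using nz by simp
  show "(1 - (4*t-2)/(4*t-1)) * (4*t-1) = 1" unfolding left_diff_distrib a by simp
  show c: "2*t/(4*t-1) * (4*t-1) = 2*t" using nz by simp
  show "(1 - 2*t/(4*t-1)) * (4*t-1) = 2*t-1" unfolding left_diff_distrib c by simp
qed

lemma core_real:
  fixes t r H h :: real
  assumes t: "t > 1/2" and r: "0 < r" "r < 1" and H: "0 < H" and h: "0 < h"
   and B: "1 \<le> r powr ((4*t-2)/(4*t-1)) * H powr (1 - (4*t-2)/(4*t-1))"
   and D: "h \<le> r powr (2*t/(4*t-1)) * H powr (1 - 2*t/(4*t-1))"
  shows "1 - r\<^sup>2 < H - h\<^sup>2"
proof -
  define b where "b = (4*t-2)/(4*t-1)"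
  define th where "th = 2*t/(4*t-1)"
  have dp: "0 < 2*t - 1/2" and dq: "0 < 4*t - 1" using t by simp_all
  have lnB: "0 \<le> b * ln r + (1-b) * ln H"
  proof -
    have "ln 1 \<le> ln (r powr b * H powr (1-b))"
      using B r H by (subst ln_le_cancel_iff) (auto simp: b_def)
    thus ?thesis using r H by (simp add: ln_mult ln_powr)
  qed
  have lnD: "ln h \<le> th * ln r + (1-th) * ln H"
  proof -
    have "ln h \<le> ln (r powr th * H powr (1-th))"
      using D r H h by (subst ln_le_cancel_iff) (auto simp: th_def)
    thus ?thesis using r H by (simp add: ln_mult ln_powr)
  qed
  have e1: "(b * ln r + (1-b) * ln H) * (4*t-1) = (4*t-2) * ln r + ln H"
  proof -
    have "(b * ln r + (1-b) * ln H) * (4*t-1) = (b * (4*t-1)) * ln r + ((1-b) * (4*t-1)) * ln H"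
      by (simp add: algebra_simps)
    thus ?thesis unfolding b_def coefs[OF t] by simp
  qed
  have s1: "0 \<le> (4*t-2) * ln r + ln H"
    using mult_nonneg_nonneg[OF lnB, of "4*t-1"] dq unfolding e1 by simp
  have e2: "(th * ln r + (1-th) * ln H) * (4*t-1) = 2*t * ln r + (2*t-1) * ln H"
  proof -
    have "(th * ln r + (1-th) * ln H) * (4*t-1) = (th * (4*t-1)) * ln r + ((1-th) * (4*t-1)) * ln H"
      by (simp add: algebra_simps)
    thus ?thesis unfolding th_def coefs[OF t] by simp
  qed
  have s2: "ln h * (4*t-1) \<le> 2*t * ln r + (2*t-1) * ln H"
    using mult_right_mono[OF lnD, of "4*t-1"] dq unfolding e2 by simp
  have s3: "(2 * ln h) * (4*t-1) \<le> (2 * ln r + ln H) * (4*t-1)"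
    using s1 s2 by (simp add: algebra_simps)
  have s4: "2 * ln h \<le> 2 * ln r + ln H" using s3 dq by simp
  have hH: "h\<^sup>2 \<le> r\<^sup>2 * H"
  proof -
    have "h\<^sup>2 = exp (2 * ln h)" using h exp_of_nat_mult[of 2 "ln h"] by simp
    also have "\<dots> \<le> exp (2 * ln r + ln H)" using s4 by simp
    also have "\<dots> = exp (2 * ln r) * exp (ln H)" by (rule exp_add)
    also have "\<dots> = r\<^sup>2 * H" using r H exp_of_nat_mult[of 2 "ln r"] by simp
    finally show ?thesis .
  qed
  have lr: "ln r < 0" using r by simp
  have "(4*t-2) * ln r < 0" using lr t by (intro mult_pos_neg) auto
  hence "0 < ln H" using s1 by simp
  hence H1: "1 < H" using H by simp
  have r2: "r\<^sup>2 < 1" using r power_less_one_iff[of r 2] by simp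
  have "1 * (1 - r\<^sup>2) < H * (1 - r\<^sup>2)" using H1 r2 by (intro mult_strict_right_mono) auto
  thus ?thesis using hH by (simp add: algebra_simps)
qed

lemma core:
  assumes ac: "ac_dens_pair M p1 p2" and ne: "\<not> (AE x in M. p1 x = p2 x)"
    and t: "t > 1/2" and ft: "I_fun M p1 p2 t \<noteq> \<infinity>" and f2: "I_fun M p1 p2 (2*t) \<noteq> \<infinity>"
  shows "1 - (rho M p1 p2)\<^sup>2 < enn2real (I_fun M p1 p2 (2*t)) - (enn2real (I_fun M p1 p2 t))\<^sup>2"
proof -
  define H where "H = enn2real (I_fun M p1 p2 (2*t))"
  define h where "h = enn2real (I_fun M p1 p2 t)"
  define r where "r = rho M p1 p2"
  have IH: "I_fun M p1 p2 (2*t) = ennreal H" unfolding H_def by (rule I_fin_eq[OF f2])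
  have Ih: "I_fun M p1 p2 t = ennreal h" unfolding h_def by (rule I_fin_eq[OF ft])
  have H: "0 < H" using I_pos[OF ac, of "2*t"] IH by simp
  have h: "0 < h" using I_pos[OF ac, of t] Ih by simp
  have r: "0 < r" "r < 1" using rho_props[OF ac] rho_lt1[OF ac ne] by (simp_all add: r_def)
  have Ir: "I_fun M p1 p2 (1/2) = ennreal r" using rho_props(1)[OF ac] by (simp add: r_def)
  have fr: "I_fun M p1 p2 (1/2) \<noteq> \<infinity>" using Ir by simp
  have er: "enn2real (I_fun M p1 p2 (1/2)) = r" using Ir r by simp
  have dp: "0 < 2*t - 1/2" and dq: "0 < 4*t - 1" using t by simp_all
  define b where "b = (4*t-2)/(4*t-1)"
  define th where "th = 2*t/(4*t-1)"
  have b0: "0 < b" unfolding b_def using t dq by (intro divide_pos_pos) auto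
  have b1: "b < 1" unfolding b_def using dq by (simp add: divide_less_eq_1_pos)
  have th0: "0 < th" unfolding th_def using t dq by (intro divide_pos_pos) auto
  have th1: "th < 1" unfolding th_def using dq t by (simp add: divide_less_eq_1_pos)
  have cb: "b * (1/2) + (1-b) * (2*t) = 1"
  proof -
    have "(b * (1/2) + (1-b) * (2*t)) * (4*t-1) = (b * (4*t-1)) * (1/2) + ((1-b) * (4*t-1)) * (2*t)"
      by (simp add: algebra_simps)
    also have "\<dots> = 1 * (4*t-1)" unfolding b_def coefs[OF t] by (simp add: algebra_simps)
    finally show ?thesis using dq by (subst (asm) mult_cancel_right) auto
  qed
  have cth: "th * (1/2) + (1-th) * (2*t) = t"
  proof -
    have "(th * (1/2) + (1-th) * (2*t)) * (4*t-1) = (th * (4*t-1)) * (1/2) + ((1-th) * (4*t-1)) * (2*t)"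
      by (simp add: algebra_simps)
    also have "\<dots> = t * (4*t-1)" unfolding th_def coefs[OF t] by (simp add: algebra_simps)
    finally show ?thesis using dq by (subst (asm) mult_cancel_right) auto
  qed
  have "I_fun M p1 p2 (b * (1/2) + (1-b) * (2*t))
     \<le> ennreal (enn2real (I_fun M p1 p2 (1/2)) powr b * enn2real (I_fun M p1 p2 (2*t)) powr (1-b))"
    by (rule I_holder[OF ac b0 b1 fr f2])
  hence "ennreal 1 \<le> ennreal (r powr b * H powr (1-b))"
    unfolding cb I_one[OF ac] er H_def[symmetric] by simp
  hence B: "1 \<le> r powr b * H powr (1-b)"
    using ennreal_le_iff[of "r powr b * H powr (1-b)" 1] by simp
  have "I_fun M p1 p2 (th * (1/2) + (1-th) * (2*t))
     \<le> ennreal (enn2real (I_fun M p1 p2 (1/2)) powr th * enn2real (I_fun M p1 p2 (2*t)) powr (1-th))"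
    by (rule I_holder[OF ac th0 th1 fr f2])
  hence "ennreal h \<le> ennreal (r powr th * H powr (1-th))"
    unfolding cth Ih er H_def[symmetric] by simp
  hence D: "h \<le> r powr th * H powr (1-th)"
    using ennreal_le_iff[of "r powr th * H powr (1-th)" h] by simp
  have "1 - r\<^sup>2 < H - h\<^sup>2"
    by (rule core_real[OF t r H h]) (use B D in \<open>simp_all add: b_def th_def\<close>)
  thus ?thesis by (simp add: H_def h_def r_def)
qed

lemma R_half:
  assumes ac: "ac_dens_pair M p1 p2"
  shows "R1 M p1 p2 (1/2) = ennreal (1 - (rho M p1 p2)\<^sup>2)"
    "R2 M p1 p2 (1/2) = ennreal (1 - (rho M p1 p2)\<^sup>2)"
proof -
  have er: "enn2real (I_fun M p1 p2 (1/2)) = rho M p1 p2"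
    using rho_props[OF ac] by simp
  show "R1 M p1 p2 (1/2) = ennreal (1 - (rho M p1 p2)\<^sup>2)"
    unfolding R1_eq[OF ac] using I_zero[OF ac] er by simp
  show "R2 M p1 p2 (1/2) = ennreal (1 - (rho M p1 p2)\<^sup>2)"
    unfolding R2_eq[OF ac] using I_one[OF ac] er by simp
qed



lemma R2_gt:
  assumes ac: "ac_dens_pair M p1 p2" and ne: "\<not> (AE x in M. p1 x = p2 x)"
    and t: "t > 1/2" and ft: "I_fun M p1 p2 t \<noteq> \<infinity>"
  shows "ennreal (1 - (rho M p1 p2)\<^sup>2) < R2 M p1 p2 t"
proof (cases "I_fun M p1 p2 (2*t) = \<infinity>")
  case True thus ?thesis unfolding R2_eq[OF ac] by simp
next
  case False
  have r: "0 < rho M p1 p2" "rho M p1 p2 \<le> 1" using rho_props[OF ac] by auto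
  have nn: "0 \<le> 1 - (rho M p1 p2)\<^sup>2" using r by (simp add: power_le_one)
  have "R2 M p1 p2 t = ennreal (enn2real (I_fun M p1 p2 (2*t)) - (enn2real (I_fun M p1 p2 t))\<^sup>2)"
    unfolding R2_eq[OF ac] using False by (simp only: if_False)
  thus ?thesis using ennreal_less_iff[THEN iffD2, OF nn core[OF ac ne t ft False]] by simp
qed

lemma R1_gt:
  assumes ac: "ac_dens_pair M p1 p2" and ne: "\<not> (AE x in M. p1 x = p2 x)"
    and t: "t < 1/2" and ft: "I_fun M p1 p2 t \<noteq> \<infinity>"
  shows "ennreal (1 - (rho M p1 p2)\<^sup>2) < R1 M p1 p2 t"
proof -
  have ac': "ac_dens_pair M p2 p1" by (rule ac_sym[OF ac])
  have ne': "\<not> (AE x in M. p2 x = p1 x)" using ne by (simp add: eq_commute)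
  have i1: "I_fun M p1 p2 (2*t-1) = I_fun M p2 p1 (2*(1-t))"
  proof -
    have "I_fun M p1 p2 (2*t-1) = I_fun M p2 p1 (1 - (2*t-1))" by (rule I_sym)
    also have "1 - (2*t-1) = 2*(1-t)" by simp
    finally show ?thesis .
  qed
  have i2: "I_fun M p1 p2 t = I_fun M p2 p1 (1-t)"
    using I_sym[of M p1 p2 t] by simp
  have t': "1 - t > 1/2" using t by simp
  have ft': "I_fun M p2 p1 (1-t) \<noteq> \<infinity>" using ft i2 by simp
  show ?thesis
  proof (cases "I_fun M p1 p2 (2*t-1) = \<infinity>")
    case True thus ?thesis unfolding R1_eq[OF ac] by simp
  next
    case False
    hence f2: "I_fun M p2 p1 (2*(1-t)) \<noteq> \<infinity>" using i1 by simp
    have r: "0 < rho M p1 p2" "rho M p1 p2 \<le> 1" using rho_props[OF ac] by auto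
    have nn: "0 \<le> 1 - (rho M p1 p2)\<^sup>2" using r by (simp add: power_le_one)
    have lt: "1 - (rho M p1 p2)\<^sup>2 < enn2real (I_fun M p1 p2 (2*t-1)) - (enn2real (I_fun M p1 p2 t))\<^sup>2"
      using core[OF ac' ne' t' ft' f2] unfolding i1 i2 rho_sym[of M p2 p1] .
    have "R1 M p1 p2 t = ennreal (enn2real (I_fun M p1 p2 (2*t-1)) - (enn2real (I_fun M p1 p2 t))\<^sup>2)"
      unfolding R1_eq[OF ac] using False by (simp only: if_False)
    thus ?thesis using ennreal_less_iff[THEN iffD2, OF nn lt] by simp
  qed
qed




lemma pint:
  fixes e :: real
  assumes e: "e > -1"
  shows "(\<integral>\<^sup>+x. ennreal (indicator {0<..1} x * x powr e) \<partial>lborel) = ennreal (1/(e+1))"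
proof -
  have hi: "((\<lambda>x::real. x powr e) has_integral (1/(e+1))) {0..1}"
    using has_integral_powr_from_0[of e 1] e by simp
  have "(\<integral>\<^sup>+x. ennreal (x powr e) * indicator {0..1} x \<partial>lborel) = ennreal (1/(e+1))"
    by (rule nn_integral_has_integral_lebesgue'[OF _ hi]) simp
  moreover have "(\<integral>\<^sup>+x. ennreal (indicator {0<..1} x * x powr e) \<partial>lborel)
      = (\<integral>\<^sup>+x. ennreal (x powr e) * indicator {0..1} x \<partial>lborel)"
    by (rule nn_integral_cong) (auto simp: indicator_def)
  ultimately show ?thesis by simp
qed

lemma pinf:
  "(\<integral>\<^sup>+x. ennreal (indicator {0<..1} x * x powr (-1)) \<partial>lborel) = \<infinity>"
proof (rule ccontr)
  let ?X = "(\<integral>\<^sup>+x. ennreal (indicator {0<..1} x * x powr (-1)) \<partial>lborel)"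
  assume "?X \<noteq> \<infinity>"
  then obtain K where K: "?X = ennreal K" "0 \<le> K" by (cases ?X rule: ennreal_cases) auto
  define e where "e = 1/(K+1) - 1"
  have e: "e > -1" using K by (simp add: e_def)
  have e1: "1/(e+1) = K + 1" using K by (simp add: e_def)
  have "ennreal (K+1) = (\<integral>\<^sup>+x. ennreal (indicator {0<..1} x * x powr e) \<partial>lborel)"
    using pint[OF e] e1 by simp
  also have "\<dots> \<le> ?X"
  proof (rule nn_integral_mono)
    fix x :: real
    show "ennreal (indicator {0<..1} x * x powr e) \<le> ennreal (indicator {0<..1} x * x powr (-1))"
    proof (cases "x \<in> {0<..1}")
      case True
      hence "x powr e \<le> x powr (-1)" using e by (intro powr_mono') auto
      thus ?thesis using True by (intro ennreal_leI) simp
    next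
      case False thus ?thesis by simp
    qed
  qed
  also have "\<dots> = ennreal K" by (rule K(1))
  finally have "K + 1 \<le> K" using K by (subst (asm) ennreal_le_iff) auto
  thus False by simp
qed

lemma construct:
  fixes s :: real
  assumes s: "s > 1/2"
  shows "\<exists>(N::real measure) q1 q2. ac_dens_pair N q1 q2 \<and> I_fun N q1 q2 s < \<infinity> \<and> I_fun N q1 q2 (2 * s) = \<infinity>"
proof -
  define a where "a = 1/(2 * s)"
  define c where "c = 1 - a"
  have a: "0 < a" "a < 1" using s by (auto simp: a_def field_simps)
  have c: "0 < c" using a by (simp add: c_def)
  have as: "a * s = 1/2" using s by (simp add: a_def)
  define q2 where "q2 x = (indicator {0<..1} x :: real)" for x :: real
  define q1 where "q1 x = indicator {0<..1} x * (c * x powr (-a))" for x :: real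
  have m1: "q1 \<in> borel_measurable lborel" unfolding q1_def by measurable
  have m2: "q2 \<in> borel_measurable lborel" unfolding q2_def by measurable
  have int2: "(\<integral>\<^sup>+x. ennreal (q2 x) \<partial>lborel) = 1"
  proof -
    have "(\<integral>\<^sup>+x. ennreal (q2 x) \<partial>lborel) = (\<integral>\<^sup>+x. ennreal (indicator {0<..1} x * x powr 0) \<partial>lborel)"
      by (rule nn_integral_cong) (auto simp: q2_def indicator_def)
    also have "\<dots> = 1" using pint[of 0] by simp
    finally show ?thesis .
  qed
  have int1: "(\<integral>\<^sup>+x. ennreal (q1 x) \<partial>lborel) = 1"
  proof -
    have "(\<integral>\<^sup>+x. ennreal (q1 x) \<partial>lborel) = (\<integral>\<^sup>+x. ennreal c * ennreal (indicator {0<..1} x * x powr (-a)) \<partial>lborel)"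
      by (rule nn_integral_cong) (use c in \<open>auto simp: q1_def indicator_def ennreal_mult[symmetric]\<close>)
    also have "\<dots> = ennreal c * ennreal (1/(-a+1))"
      by (subst nn_integral_cmult) (use a pint[of "-a"] in auto)
    also have "\<dots> = ennreal (c * (1/(-a+1)))" using c a by (intro ennreal_mult[symmetric]) auto
    also have "c * (1/(-a+1)) = 1" using a by (simp add: c_def)
    finally show ?thesis by simp
  qed
  have ac: "ac_dens_pair lborel q1 q2"
    unfolding ac_dens_pair_def
    using sigma_finite_lborel m1 m2 int1 int2 c
    by (auto simp: q1_def q2_def indicator_def intro!: AE_I2)
  have Is: "I_fun lborel q1 q2 s = ennreal (c powr s) * ennreal (1/((-1/2)+1))"
  proof -
    have "I_fun lborel q1 q2 s = (\<integral>\<^sup>+x. ennreal (c powr s) * ennreal (indicator {0<..1} x * x powr (-1/2)) \<partial>lborel)"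
      unfolding I_fun_def
    proof (rule nn_integral_cong)
      fix x :: real
      show "ennreal (q1 x powr s * q2 x powr (1 - s)) = ennreal (c powr s) * ennreal (indicator {0<..1} x * x powr (-1/2))"
      proof (cases "x \<in> {0<..1}")
        case True
        have "q1 x powr s * q2 x powr (1 - s) = (c * x powr (-a)) powr s"
          using True by (simp add: q1_def q2_def)
        also have "\<dots> = c powr s * x powr (-a * s)"
          using True c by (simp add: powr_mult powr_powr)
        also have "-a * s = -1/2" using as by simp
        finally show ?thesis using True c by (simp add: ennreal_mult[symmetric])
      next
        case False thus ?thesis by (simp add: q1_def q2_def)
      qed
    qed
    also have "\<dots> = ennreal (c powr s) * ennreal (1/((-1/2)+1))"
      by (subst nn_integral_cmult) (use pint[of "-1/2"] in auto)
    finally show ?thesis .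
  qed
  have I2s: "I_fun lborel q1 q2 (2 * s) = ennreal (c powr (2 * s)) * \<infinity>"
  proof -
    have "I_fun lborel q1 q2 (2 * s) = (\<integral>\<^sup>+x. ennreal (c powr (2 * s)) * ennreal (indicator {0<..1} x * x powr (-1)) \<partial>lborel)"
      unfolding I_fun_def
    proof (rule nn_integral_cong)
      fix x :: real
      show "ennreal (q1 x powr (2 * s) * q2 x powr (1 - 2 * s)) = ennreal (c powr (2 * s)) * ennreal (indicator {0<..1} x * x powr (-1))"
      proof (cases "x \<in> {0<..1}")
        case True
        have "q1 x powr (2 * s) * q2 x powr (1 - 2 * s) = (c * x powr (-a)) powr (2 * s)"
          using True by (simp add: q1_def q2_def)
        also have "\<dots> = c powr (2 * s) * x powr (-a * (2 * s))"
          using True c by (simp add: powr_mult powr_powr)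
        also have "-a * (2 * s) = -1" using as by simp
        finally show ?thesis using True c by (simp add: ennreal_mult[symmetric])
      next
        case False thus ?thesis by (simp add: q1_def q2_def)
      qed
    qed
    also have "\<dots> = ennreal (c powr (2 * s)) * \<infinity>"
      by (subst nn_integral_cmult) (use pinf in auto)
    finally show ?thesis .
  qed
  have "I_fun lborel q1 q2 s < \<infinity>" unfolding Is by (simp add: ennreal_mult_less_top)
  moreover have "I_fun lborel q1 q2 (2 * s) = \<infinity>" unfolding I2s using c by (simp add: ennreal_mult_top)
  ultimately show ?thesis using ac by blast
qed

lemma exR:
  fixes t :: real
  assumes t: "t \<noteq> 1/2"
  shows "\<exists>(N::real measure) q1 q2. ac_dens_pair N q1 q2 \<and> I_fun N q1 q2 t < \<infinity> \<and> R_fun N q1 q2 t = \<infinity>"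
proof (cases "t > 1/2")
  case True
  then obtain N :: "real measure" and q1 q2 where
    ac: "ac_dens_pair N q1 q2" and f: "I_fun N q1 q2 t < \<infinity>" and i: "I_fun N q1 q2 (2*t) = \<infinity>"
    using construct by blast
  have "R2 N q1 q2 t = \<infinity>" unfolding R2_eq[OF ac] using i by simp
  hence "R_fun N q1 q2 t = \<infinity>" unfolding R_fun_def by simp
  thus ?thesis using ac f by blast
next
  case False
  hence t': "1 - t > 1/2" using t by simp
  then obtain N :: "real measure" and q1 q2 where
    ac: "ac_dens_pair N q1 q2" and f: "I_fun N q1 q2 (1-t) < \<infinity>" and i: "I_fun N q1 q2 (2*(1-t)) = \<infinity>"
    using construct by blast
  have ac': "ac_dens_pair N q2 q1" by (rule ac_sym[OF ac])
  have f': "I_fun N q2 q1 t < \<infinity>" using f I_sym[of N q2 q1 t] by simp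
  have "I_fun N q2 q1 (2*t-1) = I_fun N q1 q2 (1 - (2*t-1))" by (rule I_sym)
  also have "1 - (2*t-1) = 2*(1-t)" by simp
  finally have i': "I_fun N q2 q1 (2*t-1) = \<infinity>" using i by simp
  have "R1 N q2 q1 t = \<infinity>" unfolding R1_eq[OF ac'] using i' by simp
  hence "R_fun N q2 q1 t = \<infinity>" unfolding R_fun_def by simp
  thus ?thesis using ac' f' by blast
qed



theorem theorem2:
  fixes M :: "'a measure" and p1 p2 :: "'a \<Rightarrow> real"
  assumes "ac_dens_pair M p1 p2"
  shows
    "(\<not> (AE x in M. p1 x = p2 x) \<longrightarrow>
        (\<forall>t\<in>D_set M p1 p2.
            R_fun M p1 p2 t \<ge> ennreal (1 - (rho M p1 p2)\<^sup>2) \<and>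
            (R_fun M p1 p2 t = ennreal (1 - (rho M p1 p2)\<^sup>2) \<longleftrightarrow> t = 1/2)) \<and>
        1/2 \<in> D_set M p1 p2 \<and>
        (\<forall>t\<in>D_set M p1 p2. R_fun M p1 p2 (1/2) \<le> R_fun M p1 p2 t))
     \<and> R_fun M p1 p2 (1/2) = ennreal (1 - (rho M p1 p2)\<^sup>2)
     \<and> (\<forall>t::real. t \<noteq> 1/2 \<longrightarrow>
          (\<exists>(N :: real measure) q1 q2. ac_dens_pair N q1 q2 \<and>
              I_fun N q1 q2 t < \<infinity> \<and> R_fun N q1 q2 t = \<infinity>))
     \<and> (\<forall>t::real. t \<noteq> 1/2 \<longrightarrow>
          (SUP (N, q1, q2) \<in> {(N :: real measure, q1, q2). ac_dens_pair N q1 q2 \<and> I_fun N q1 q2 t < \<infinity>}.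
              R_fun N q1 q2 t) = \<infinity>)"
proof -
  note ac = assms
  define e where "e = ennreal (1 - (rho M p1 p2)\<^sup>2)"
  have Rh: "R_fun M p1 p2 (1/2) = e"
    unfolding R_fun_def R_half[OF ac] e_def by simp
  have P1: "\<not> (AE x in M. p1 x = p2 x) \<longrightarrow>
        (\<forall>t\<in>D_set M p1 p2. R_fun M p1 p2 t \<ge> e \<and> (R_fun M p1 p2 t = e \<longleftrightarrow> t = 1/2)) \<and>
        1/2 \<in> D_set M p1 p2 \<and>
        (\<forall>t\<in>D_set M p1 p2. R_fun M p1 p2 (1/2) \<le> R_fun M p1 p2 t)"
  proof
    assume ne: "\<not> (AE x in M. p1 x = p2 x)"
    have gt: "e < R_fun M p1 p2 t" if tD: "t \<in> D_set M p1 p2" and tn: "t \<noteq> 1/2" for t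
    proof -
      have ft: "I_fun M p1 p2 t \<noteq> \<infinity>" using tD by (simp add: D_set_def)
      show ?thesis
      proof (cases "t > 1/2")
        case True
        have "e < R2 M p1 p2 t" unfolding e_def by (rule R2_gt[OF ac ne True ft])
        also have "\<dots> \<le> R_fun M p1 p2 t" unfolding R_fun_def by simp
        finally show ?thesis .
      next
        case False
        hence tl: "t < 1/2" using tn by simp
        have "e < R1 M p1 p2 t" unfolding e_def by (rule R1_gt[OF ac ne tl ft])
        also have "\<dots> \<le> R_fun M p1 p2 t" unfolding R_fun_def by simp
        finally show ?thesis .
      qed
    qed
    have A: "\<forall>t\<in>D_set M p1 p2. R_fun M p1 p2 t \<ge> e \<and> (R_fun M p1 p2 t = e \<longleftrightarrow> t = 1/2)"
    proof
      fix t assume tD: "t \<in> D_set M p1 p2"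
      show "R_fun M p1 p2 t \<ge> e \<and> (R_fun M p1 p2 t = e \<longleftrightarrow> t = 1/2)"
      proof (cases "t = 1/2")
        case True show ?thesis using Rh unfolding True by simp
      next
        case False
        with gt[OF tD False] show ?thesis by auto
      qed
    qed
    have B: "1/2 \<in> D_set M p1 p2"
      unfolding D_set_def using rho_props(1)[OF ac] by simp
    have C: "\<forall>t\<in>D_set M p1 p2. R_fun M p1 p2 (1/2) \<le> R_fun M p1 p2 t"
      using A Rh by simp
    show "(\<forall>t\<in>D_set M p1 p2. R_fun M p1 p2 t \<ge> e \<and> (R_fun M p1 p2 t = e \<longleftrightarrow> t = 1/2)) \<and>
        1/2 \<in> D_set M p1 p2 \<and>
        (\<forall>t\<in>D_set M p1 p2. R_fun M p1 p2 (1/2) \<le> R_fun M p1 p2 t)"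
      using A B C by blast
  qed
  have P3: "\<forall>t::real. t \<noteq> 1/2 \<longrightarrow>
          (\<exists>(N :: real measure) q1 q2. ac_dens_pair N q1 q2 \<and>
              I_fun N q1 q2 t < \<infinity> \<and> R_fun N q1 q2 t = \<infinity>)"
    using exR by blast
  have P4: "\<forall>t::real. t \<noteq> 1/2 \<longrightarrow>
          (SUP (N, q1, q2) \<in> {(N :: real measure, q1, q2). ac_dens_pair N q1 q2 \<and> I_fun N q1 q2 t < \<infinity>}.
              R_fun N q1 q2 t) = \<infinity>"
  proof (intro allI impI)
    fix t :: real assume t: "t \<noteq> 1/2"
    obtain N :: "real measure" and q1 q2 where
      ac1: "ac_dens_pair N q1 q2" and f: "I_fun N q1 q2 t < \<infinity>" and r: "R_fun N q1 q2 t = \<infinity>"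
      using exR[OF t] by blast
    let ?S = "{(N :: real measure, q1, q2). ac_dens_pair N q1 q2 \<and> I_fun N q1 q2 t < \<infinity>}"
    have mem: "(N, q1, q2) \<in> ?S" using ac1 f by simp
    have "R_fun N q1 q2 t \<le> (SUP (N, q1, q2) \<in> ?S. R_fun N q1 q2 t)"
      using SUP_upper[OF mem, of "\<lambda>(N, q1, q2). R_fun N q1 q2 t"] by simp
    thus "(SUP (N, q1, q2) \<in> ?S. R_fun N q1 q2 t) = \<infinity>" using r by (simp add: top_unique)
  qed
  show ?thesis using P1 Rh P3 P4 unfolding e_def by blast
qed


end
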